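(* Let $J=[a,b]$, $\gamma:J\to\mathbb{C}\setminus\Omega$ a $C^1$ path with $|\gamma'(\tau)|\le1$ for all $\tau\in J$, and $\eta:\mathbb{C}\to[0,\infty)$ a $1$-Lipschitz function with zero set $\Omega$. Let $D(\tau,\underline\zeta)=\eta(\dot\zeta_1)+\cdots+\eta(\dot\zeta_n)+\eta(\gamma(\tau)-S_n(\underline\zeta))$ and $X_i(\tau,\underline\zeta)=\frac{\eta(\dot\zeta_i)}{D(\tau,\underline\zeta)}\gamma'(\tau)$ for $i=1,\ldots,n$. Then for any $\tau\in J$ and $\underline\zeta,\underline\zeta'\in\mathcal S_\Omega^n$, \[ \sum_{i=1}^n|X_i(\tau,\underline\zeta')-X_i(\tau,\underline\zeta)|\le\frac{3}{D(\tau,\underline\zeta')}\sum_{i=1}^n|\dot\zeta'_i-\dot\zeta_i|. \]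
   Context: $\Omega\subset\mathbb{C}$ closed, discrete, stable under addition, $0\in\Omega$ (so $D>0$ everywhere). $\mathcal S_\Omega$: Riemann surface of classes, modulo homotopy with fixed endpoints, of paths $\gamma:[0,1]\to\mathbb{C}$ with $\gamma\equiv0$ or ($\gamma(0)=0$, $\gamma((0,1])\subset\mathbb{C}\setminus\Omega$), with projection $\pi_\Omega([\gamma])=\gamma(1)$; $\dot\zeta=\pi_\Omega(\zeta)$; $S_n(\underline\zeta)=\dot\zeta_1+\cdots+\dot\zeta_n$ for $\underline\zeta=(\zeta_1,\ldots,\zeta_n)\in\mathcal S_\Omega^n$. *)

theory Defs
  imports "HOL-Analysis.Analysis"
begin

definition adm_path :: "complex set \<Rightarrow> (real \<Rightarrow> complex) \<Rightarrow> bool" where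
  "adm_path \<Omega> g \<longleftrightarrow> path g \<and>
     ((\<forall>t\<in>{0..1}. g t = 0) \<or> (g 0 = 0 \<and> (\<forall>t\<in>{0<..1}. g t \<notin> \<Omega>)))"

definition adm_homotopic :: "complex set \<Rightarrow> (real \<Rightarrow> complex) \<Rightarrow> (real \<Rightarrow> complex) \<Rightarrow> bool" where
  "adm_homotopic \<Omega> g h \<longleftrightarrow> adm_path \<Omega> g \<and> adm_path \<Omega> h \<and>
     (\<exists>H :: real \<times> real \<Rightarrow> complex. continuous_on ({0..1} \<times> {0..1}) H \<and>
        (\<forall>t\<in>{0..1}. H (0, t) = g t \<and> H (1, t) = h t) \<and>
        (\<forall>s\<in>{0..1}. H (s, 0) = g 0 \<and> H (s, 1) = g 1 \<and> adm_path \<Omega> (\<lambda>t. H (s, t))))"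

text \<open>The Riemann surface S_Omega as the set of homotopy classes of admissible paths.\<close>
definition S_Omega :: "complex set \<Rightarrow> (real \<Rightarrow> complex) set set" where
  "S_Omega \<Omega> = {g. adm_path \<Omega> g} // {(g, h). adm_homotopic \<Omega> g h}"

definition pi_Omega :: "(real \<Rightarrow> complex) set \<Rightarrow> complex" where
  "pi_Omega c = (SOME g. g \<in> c) 1"

definition discrete_set :: "complex set \<Rightarrow> bool" where
  "discrete_set A \<longleftrightarrow> (\<forall>x\<in>A. \<exists>e>0. ball x e \<inter> A = {x})"

definition Ssum :: "nat \<Rightarrow> (nat \<Rightarrow> (real \<Rightarrow> complex) set) \<Rightarrow> complex" where
  "Ssum n \<zeta> = (\<Sum>i=1..n. pi_Omega (\<zeta> i))"

definition Dfun :: "(complex \<Rightarrow> real) \<Rightarrow> (real \<Rightarrow> complex) \<Rightarrow> nat \<Rightarrow> real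
                     \<Rightarrow> (nat \<Rightarrow> (real \<Rightarrow> complex) set) \<Rightarrow> real" where
  "Dfun \<eta> \<gamma> n \<tau> \<zeta> = (\<Sum>i=1..n. \<eta> (pi_Omega (\<zeta> i))) + \<eta> (\<gamma> \<tau> - Ssum n \<zeta>)"

definition Xfun :: "(complex \<Rightarrow> real) \<Rightarrow> (real \<Rightarrow> complex) \<Rightarrow> (real \<Rightarrow> complex) \<Rightarrow> nat \<Rightarrow> nat
                     \<Rightarrow> real \<Rightarrow> (nat \<Rightarrow> (real \<Rightarrow> complex) set) \<Rightarrow> complex" where
  "Xfun \<eta> \<gamma> \<gamma>' n i \<tau> \<zeta> = complex_of_real (\<eta> (pi_Omega (\<zeta> i)) / Dfun \<eta> \<gamma> n \<tau> \<zeta>) * \<gamma>' \<tau>"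

end

theory Submission
  imports Defs
begin

theorem lemma3:
  fixes \<Omega> :: "complex set" and a b :: real and \<gamma> \<gamma>' :: "real \<Rightarrow> complex"
    and \<eta> :: "complex \<Rightarrow> real" and n :: nat and \<tau> :: real
    and \<zeta> \<zeta>' :: "nat \<Rightarrow> (real \<Rightarrow> complex) set"
  assumes closed: "closed \<Omega>" and disc: "discrete_set \<Omega>"
    and add: "\<And>x y. x \<in> \<Omega> \<Longrightarrow> y \<in> \<Omega> \<Longrightarrow> x + y \<in> \<Omega>"
    and zero: "0 \<in> \<Omega>"
    and gamma_range: "\<And>t. t \<in> {a..b} \<Longrightarrow> \<gamma> t \<notin> \<Omega>"
    and gamma_deriv: "\<And>t. t \<in> {a..b} \<Longrightarrow> (\<gamma> has_vector_derivative \<gamma>' t) (at t within {a..b})"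
    and gamma_C1: "continuous_on {a..b} \<gamma>'"
    and gamma_bound: "\<And>t. t \<in> {a..b} \<Longrightarrow> norm (\<gamma>' t) \<le> 1"
    and eta_nonneg: "\<And>z. \<eta> z \<ge> 0"
    and eta_lip: "\<And>z w. \<bar>\<eta> z - \<eta> w\<bar> \<le> dist z w"
    and eta_zeros: "{z. \<eta> z = 0} = \<Omega>"
    and tau: "\<tau> \<in> {a..b}"
    and zeta: "\<And>i. i \<in> {1..n} \<Longrightarrow> \<zeta> i \<in> S_Omega \<Omega>"
    and zeta': "\<And>i. i \<in> {1..n} \<Longrightarrow> \<zeta>' i \<in> S_Omega \<Omega>"
  shows "(\<Sum>i=1..n. norm (Xfun \<eta> \<gamma> \<gamma>' n i \<tau> \<zeta>' - Xfun \<eta> \<gamma> \<gamma>' n i \<tau> \<zeta>))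
         \<le> 3 / Dfun \<eta> \<gamma> n \<tau> \<zeta>' * (\<Sum>i=1..n. norm (pi_Omega (\<zeta>' i) - pi_Omega (\<zeta> i)))"
proof -
  define z where "z i = pi_Omega (\<zeta> i)" for i
  define z' where "z' i = pi_Omega (\<zeta>' i)" for i
  define D where "D = Dfun \<eta> \<gamma> n \<tau> \<zeta>"
  define D' where "D' = Dfun \<eta> \<gamma> n \<tau> \<zeta>'"
  define \<delta> where "\<delta> = (\<Sum>i=1..n. norm (z' i - z i))"
  have inO: "\<eta> w = 0 \<longleftrightarrow> w \<in> \<Omega>" for w using eta_zeros by auto
  have sumO: "\<And>A. finite A \<Longrightarrow> (\<forall>i\<in>A. f i \<in> \<Omega>) \<longrightarrow> sum f A \<in> \<Omega>" for f :: "nat \<Rightarrow> complex"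
  proof -
    fix A :: "nat set" assume "finite A"
    then show "(\<forall>i\<in>A. f i \<in> \<Omega>) \<longrightarrow> sum f A \<in> \<Omega>"
      by (induction A rule: finite_induct) (auto simp: zero add)
  qed
  have Dpos: "Dfun \<eta> \<gamma> n \<tau> w > 0" for w
  proof (rule ccontr)
    assume "\<not> Dfun \<eta> \<gamma> n \<tau> w > 0"
    moreover have nn: "(\<Sum>i=1..n. \<eta> (pi_Omega (w i))) \<ge> 0" by (simp add: sum_nonneg eta_nonneg)
    ultimately have h: "(\<Sum>i=1..n. \<eta> (pi_Omega (w i))) = 0" "\<eta> (\<gamma> \<tau> - Ssum n w) = 0"
      using eta_nonneg[of "\<gamma> \<tau> - Ssum n w"] unfolding Dfun_def by linarith+
    have "\<forall>i\<in>{1..n}. \<eta> (pi_Omega (w i)) = 0"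
      using h(1) sum_nonneg_eq_0_iff[of "{1..n}" "\<lambda>i. \<eta> (pi_Omega (w i))"] eta_nonneg by auto
    hence "Ssum n w \<in> \<Omega>" unfolding Ssum_def using sumO[of "{1..n}"] inO by auto
    moreover have "\<gamma> \<tau> - Ssum n w \<in> \<Omega>" using h(2) inO by auto
    ultimately have "\<gamma> \<tau> \<in> \<Omega>" using add by fastforce
    thus False using gamma_range tau by auto
  qed
  have D: "D > 0" "D' > 0" unfolding D_def D'_def using Dpos by auto
  have SD: "(\<Sum>i=1..n. \<eta> (z i)) \<le> D"
    unfolding D_def Dfun_def z_def using eta_nonneg by (simp add: sum_nonneg)
  have dD: "\<bar>D - D'\<bar> \<le> 2 * \<delta>"
  proof -
    have a: "\<bar>(\<Sum>i=1..n. \<eta> (z i)) - (\<Sum>i=1..n. \<eta> (z' i))\<bar> \<le> \<delta>"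
    proof -
      have "\<bar>(\<Sum>i=1..n. \<eta> (z i)) - (\<Sum>i=1..n. \<eta> (z' i))\<bar> = \<bar>\<Sum>i=1..n. \<eta> (z i) - \<eta> (z' i)\<bar>"
        by (simp add: sum_subtractf)
      also have "\<dots> \<le> (\<Sum>i=1..n. \<bar>\<eta> (z i) - \<eta> (z' i)\<bar>)" by (rule sum_abs)
      also have "\<dots> \<le> \<delta>" unfolding \<delta>_def
        by (rule sum_mono) (metis eta_lip dist_norm dist_commute)
      finally show ?thesis .
    qed
    have b: "\<bar>\<eta> (\<gamma> \<tau> - Ssum n \<zeta>) - \<eta> (\<gamma> \<tau> - Ssum n \<zeta>')\<bar> \<le> \<delta>"
    proof -
      have "\<bar>\<eta> (\<gamma> \<tau> - Ssum n \<zeta>) - \<eta> (\<gamma> \<tau> - Ssum n \<zeta>')\<bar> \<le> norm (Ssum n \<zeta>' - Ssum n \<zeta>)"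
        using eta_lip[of "\<gamma> \<tau> - Ssum n \<zeta>" "\<gamma> \<tau> - Ssum n \<zeta>'"] by (simp add: dist_norm)
      also have "Ssum n \<zeta>' - Ssum n \<zeta> = (\<Sum>i=1..n. z' i - z i)"
        unfolding Ssum_def z_def z'_def by (simp add: sum_subtractf)
      also have "norm \<dots> \<le> \<delta>" unfolding \<delta>_def by (rule norm_sum)
      finally show ?thesis .
    qed
    show ?thesis using a b unfolding D_def D'_def Dfun_def z_def z'_def by linarith
  qed
  have pt: "norm (Xfun \<eta> \<gamma> \<gamma>' n i \<tau> \<zeta>' - Xfun \<eta> \<gamma> \<gamma>' n i \<tau> \<zeta>)
      \<le> norm (z' i - z i) / D' + \<eta> (z i) * (2 * \<delta>) / (D * D')" for i
  proof -
    have "Xfun \<eta> \<gamma> \<gamma>' n i \<tau> \<zeta>' - Xfun \<eta> \<gamma> \<gamma>' n i \<tau> \<zeta>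
        = complex_of_real (\<eta> (z' i) / D' - \<eta> (z i) / D) * \<gamma>' \<tau>"
      unfolding Xfun_def z_def z'_def D_def D'_def by (simp add: algebra_simps)
    hence "norm (Xfun \<eta> \<gamma> \<gamma>' n i \<tau> \<zeta>' - Xfun \<eta> \<gamma> \<gamma>' n i \<tau> \<zeta>)
        = \<bar>\<eta> (z' i) / D' - \<eta> (z i) / D\<bar> * norm (\<gamma>' \<tau>)" by (simp only: norm_mult norm_of_real)
    also have "\<dots> \<le> \<bar>\<eta> (z' i) / D' - \<eta> (z i) / D\<bar>"
      using gamma_bound[OF tau] by (simp add: mult_left_le)
    also have "\<eta> (z' i) / D' - \<eta> (z i) / D = (\<eta> (z' i) - \<eta> (z i)) / D' + \<eta> (z i) * (D - D') / (D * D')"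
      using D by (simp add: field_simps)
    also have "\<bar>\<dots>\<bar> \<le> \<bar>\<eta> (z' i) - \<eta> (z i)\<bar> / D' + \<eta> (z i) * \<bar>D - D'\<bar> / (D * D')"
      using D eta_nonneg[of "z i"] by (intro order_trans[OF abs_triangle_ineq]) (simp add: abs_mult abs_divide)
    also have "\<dots> \<le> norm (z' i - z i) / D' + \<eta> (z i) * (2 * \<delta>) / (D * D')"
    proof (rule add_mono)
      show "\<bar>\<eta> (z' i) - \<eta> (z i)\<bar> / D' \<le> norm (z' i - z i) / D'"
        using D eta_lip[of "z' i" "z i"] by (simp add: divide_right_mono dist_norm)
      show "\<eta> (z i) * \<bar>D - D'\<bar> / (D * D') \<le> \<eta> (z i) * (2 * \<delta>) / (D * D')"
        using D dD eta_nonneg[of "z i"] by (simp add: divide_right_mono mult_left_mono)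
    qed
    finally show ?thesis .
  qed
  have "(\<Sum>i=1..n. norm (Xfun \<eta> \<gamma> \<gamma>' n i \<tau> \<zeta>' - Xfun \<eta> \<gamma> \<gamma>' n i \<tau> \<zeta>))
      \<le> (\<Sum>i=1..n. norm (z' i - z i) / D' + \<eta> (z i) * (2 * \<delta>) / (D * D'))"
    by (rule sum_mono) (rule pt)
  also have "\<dots> = \<delta> / D' + (\<Sum>i=1..n. \<eta> (z i)) * (2 * \<delta>) / (D * D')"
    unfolding \<delta>_def by (simp add: sum.distrib sum_divide_distrib sum_distrib_right)
  also have "(\<Sum>i=1..n. \<eta> (z i)) * (2 * \<delta>) / (D * D') \<le> D * (2 * \<delta>) / (D * D')"
    using D SD by (intro divide_right_mono mult_right_mono) (auto simp: \<delta>_def sum_nonneg)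
  also have "D * (2 * \<delta>) / (D * D') = 2 * \<delta> / D'" using D by simp
  also have "\<delta> / D' + 2 * \<delta> / D' = 3 / D' * \<delta>" by (simp add: field_simps)
  finally show ?thesis unfolding \<delta>_def z_def z'_def D'_def by simp
qed

end
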